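(* Let $\alpha_1,\dots,\alpha_\sigma$ be distinct complex numbers with $0<|\alpha_i|<1$, and positive integers $s_1,\dots,s_\sigma$. Let $\chi(\theta)=e^{i\theta}$ on $\mathbb{T}$ and set $$g_1=c\prod_{j=1}^{\sigma}(1-\overline{\alpha_j}\chi)^{s_j},\qquad g_2=\prod_{i=1}^{\sigma}(1-\alpha_i\bar\chi)^{s_i},$$ where $c=\prod_{j=1}^\sigma(-\overline{\alpha_j}^{-1})^{s_j}$. For $N\ge 0$ let $\Phi_N=\chi^{N+1}\frac{g_1}{g_2}$ and $\tilde\Phi_N=\chi^{-N-1}\frac{g_2}{g_1}$, and define the Hankel operators $H_{\Phi_N}:H^+(\mathbb{T})\to(H^+(\mathbb{T}))^\perp$, $\psi\mapsto\pi_-(\Phi_N\psi)$, and $H_{\tilde\Phi_N}:(H^+(\mathbb{T}))^\perp\to H^+(\mathbb{T})$, $\psi\mapsto\pi_+(\tilde\Phi_N\psi)$. Let $E$ be the complex vector space spanned by the functions $\frac{1}{(1-\overline{\alpha_j}\chi)^n}$, $1\le j\le\sigma$, $1\le n\le s_j$. Then $E$ is stable under $H_{\tilde\Phi_N}H_{\Phi_N}$, i.e. $H_{\tilde\Phi_N}H_{\Phi_N}(E)\subset E$.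
   Context: $\mathbb{T}=\mathbb{R}/2\pi\mathbb{Z}$ with normalized Lebesgue measure; $H^+(\mathbb{T})=\{\psi\in L^2(\mathbb{T}):\hat\psi(u)=0 \text{ for all } u<0\}$ and $(H^+(\mathbb{T}))^\perp=\{\psi\in L^2(\mathbb{T}):\hat\psi(u)=0\text{ for all }u\ge 0\}$, where $\hat\psi(u)$ is the $u$-th Fourier coefficient. $\pi_+$ and $\pi_-$ are the orthogonal projections of $L^2(\mathbb{T})$ onto $H^+(\mathbb{T})$ and $(H^+(\mathbb{T}))^\perp$ respectively. *)

theory Defs
  imports "HOL-Analysis.Analysis"
begin

text \<open>Functions on the circle T = R/2piZ are represented by functions real => complex,
  looked at on the fundamental interval [0, 2pi]; normalized Lebesgue measure.\<close>

definition L2T :: "(real \<Rightarrow> complex) \<Rightarrow> bool" where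
  "L2T f \<longleftrightarrow> f \<in> borel_measurable (lebesgue_on {0..2*pi}) \<and>
     integrable (lebesgue_on {0..2*pi}) (\<lambda>t. (cmod (f t))\<^sup>2)"

definition fcoef :: "(real \<Rightarrow> complex) \<Rightarrow> int \<Rightarrow> complex" where
  "fcoef f u = (1 / (2 * pi)) *
     integral\<^sup>L (lebesgue_on {0..2*pi}) (\<lambda>t. f t * exp (- \<i> * of_int u * of_real t))"

definition Hplus :: "(real \<Rightarrow> complex) set" where
  "Hplus = {f. L2T f \<and> (\<forall>u<0. fcoef f u = 0)}"

definition Hperp :: "(real \<Rightarrow> complex) set" where
  "Hperp = {f. L2T f \<and> (\<forall>u\<ge>0. fcoef f u = 0)}"

text \<open>is_pi_plus psi phi: phi represents the orthogonal projection pi_+ psi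
  (phi in H^+ and psi - phi orthogonal to H^+); similarly for pi_-.\<close>
definition is_pi_plus :: "(real \<Rightarrow> complex) \<Rightarrow> (real \<Rightarrow> complex) \<Rightarrow> bool" where
  "is_pi_plus \<psi> \<phi> \<longleftrightarrow> \<phi> \<in> Hplus \<and> (\<lambda>t. \<psi> t - \<phi> t) \<in> Hperp"

definition is_pi_minus :: "(real \<Rightarrow> complex) \<Rightarrow> (real \<Rightarrow> complex) \<Rightarrow> bool" where
  "is_pi_minus \<psi> \<phi> \<longleftrightarrow> \<phi> \<in> Hperp \<and> (\<lambda>t. \<psi> t - \<phi> t) \<in> Hplus"

definition chi :: "real \<Rightarrow> complex" where
  "chi t = exp (\<i> * of_real t)"

definition cconst :: "nat \<Rightarrow> (nat \<Rightarrow> complex) \<Rightarrow> (nat \<Rightarrow> nat) \<Rightarrow> complex" where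
  "cconst \<sigma> \<alpha> s = (\<Prod>j<\<sigma>. (- inverse (cnj (\<alpha> j))) ^ s j)"

definition g1 :: "nat \<Rightarrow> (nat \<Rightarrow> complex) \<Rightarrow> (nat \<Rightarrow> nat) \<Rightarrow> real \<Rightarrow> complex" where
  "g1 \<sigma> \<alpha> s t = cconst \<sigma> \<alpha> s * (\<Prod>j<\<sigma>. (1 - cnj (\<alpha> j) * chi t) ^ s j)"

definition g2 :: "nat \<Rightarrow> (nat \<Rightarrow> complex) \<Rightarrow> (nat \<Rightarrow> nat) \<Rightarrow> real \<Rightarrow> complex" where
  "g2 \<sigma> \<alpha> s t = (\<Prod>i<\<sigma>. (1 - \<alpha> i * cnj (chi t)) ^ s i)"

definition PhiN :: "nat \<Rightarrow> (nat \<Rightarrow> complex) \<Rightarrow> (nat \<Rightarrow> nat) \<Rightarrow> nat \<Rightarrow> real \<Rightarrow> complex" where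
  "PhiN \<sigma> \<alpha> s N t = chi t ^ (N + 1) * g1 \<sigma> \<alpha> s t / g2 \<sigma> \<alpha> s t"

definition PhiTN :: "nat \<Rightarrow> (nat \<Rightarrow> complex) \<Rightarrow> (nat \<Rightarrow> nat) \<Rightarrow> nat \<Rightarrow> real \<Rightarrow> complex" where
  "PhiTN \<sigma> \<alpha> s N t = inverse (chi t ^ (N + 1)) * g2 \<sigma> \<alpha> s t / g1 \<sigma> \<alpha> s t"

definition Espace :: "nat \<Rightarrow> (nat \<Rightarrow> complex) \<Rightarrow> (nat \<Rightarrow> nat) \<Rightarrow> (real \<Rightarrow> complex) set" where
  "Espace \<sigma> \<alpha> s = {f. \<exists>a :: nat \<Rightarrow> nat \<Rightarrow> complex.
      f = (\<lambda>t. \<Sum>j<\<sigma>. \<Sum>n\<in>{1..s j}. a j n / (1 - cnj (\<alpha> j) * chi t) ^ n)}"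

end

theory Submission
  imports Defs "HOL-Computational_Algebra.Polynomial"
begin

definition ech :: "int \<Rightarrow> real \<Rightarrow> complex" where
  "ech k t = exp (\<i> * of_int k * of_real t)"

definition CL :: "int set \<Rightarrow> (real \<Rightarrow> complex) set" where
  "CL U = {f. L2T f \<and> (\<forall>u\<in>U. fcoef f u = 0)}"

lemma Hplus_CL: "Hplus = CL {u. u < 0}"
  by (auto simp: Hplus_def CL_def)
lemma Hperp_CL: "Hperp = CL {u. 0 \<le> u}"
  by (auto simp: Hperp_def CL_def)

lemma aux_sq1: "(x::real) \<le> 1 + x\<^sup>2"
proof -
  have "0 \<le> (x - 1)\<^sup>2" by simp
  then have "0 \<le> x\<^sup>2 - 2 * x + 1" by (simp add: power2_diff)
  moreover have "0 \<le> x\<^sup>2" by simp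
  ultimately show ?thesis by linarith
qed

lemma aux_sq2: "((a::real) + b)\<^sup>2 \<le> 2 * a\<^sup>2 + 2 * b\<^sup>2"
proof -
  have "0 \<le> (a - b)\<^sup>2" by simp
  then show ?thesis by (simp add: power2_diff power2_sum)
qed

lemma L2T_integrable:
  assumes "L2T f" shows "integrable (lebesgue_on {0..2*pi}) f"
proof (rule Bochner_Integration.integrable_bound)
  show "integrable (lebesgue_on {0..2*pi}) (\<lambda>t. 1 + (cmod (f t))\<^sup>2)"
    using assms unfolding L2T_def by (intro Bochner_Integration.integrable_add) auto
  show "f \<in> borel_measurable (lebesgue_on {0..2*pi})" using assms unfolding L2T_def by auto
  show "AE x in lebesgue_on {0..2*pi}. norm (f x) \<le> norm (1 + (cmod (f x))\<^sup>2)"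
  proof (rule AE_I2)
    fix x
    have "cmod (f x) \<le> 1 + (cmod (f x))\<^sup>2"
      by (rule aux_sq1)
    then show "norm (f x) \<le> norm (1 + (cmod (f x))\<^sup>2)" by simp
  qed
qed

lemma L2T_cont: assumes "continuous_on UNIV f" shows "L2T f"
  unfolding L2T_def
proof
  show "f \<in> borel_measurable (lebesgue_on {0..2*pi})"
    by (rule continuous_imp_measurable_on_sets_lebesgue) (auto intro: continuous_on_subset[OF assms])
  have "continuous_on {0..2*pi} (\<lambda>t. (cmod (f t))\<^sup>2)"
    by (intro continuous_intros continuous_on_subset[OF assms]) auto
  then show "integrable (lebesgue_on {0..2*pi}) (\<lambda>t. (cmod (f t))\<^sup>2)"
    by (rule continuous_imp_integrable_real)
qed

lemma L2T_mult:
  assumes c: "continuous_on UNIV c" and f: "L2T f"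
  shows "L2T (\<lambda>t. c t * f t)"
proof -
  have "compact (c ` {0..2*pi})"
    by (intro compact_continuous_image continuous_on_subset[OF c]) auto
  then obtain B where B: "B > 0" "\<And>t. t \<in> {0..2*pi} \<Longrightarrow> cmod (c t) \<le> B"
  proof -
    from compact_imp_bounded[OF \<open>compact (c ` {0..2*pi})\<close>]
    obtain B where "B > 0" "\<forall>x\<in>c ` {0..2*pi}. norm x \<le> B"
      unfolding bounded_pos by blast
    then show ?thesis using that by auto
  qed
  have cm: "c \<in> borel_measurable (lebesgue_on {0..2*pi})"
    by (rule continuous_imp_measurable_on_sets_lebesgue) (auto intro: continuous_on_subset[OF c])
  have fm: "f \<in> borel_measurable (lebesgue_on {0..2*pi})" using f unfolding L2T_def by auto
  have m: "(\<lambda>t. c t * f t) \<in> borel_measurable (lebesgue_on {0..2*pi})"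
    using cm fm by measurable
  show ?thesis unfolding L2T_def
  proof
    show "(\<lambda>t. c t * f t) \<in> borel_measurable (lebesgue_on {0..2*pi})" by (rule m)
    show "integrable (lebesgue_on {0..2*pi}) (\<lambda>t. (cmod (c t * f t))\<^sup>2)"
    proof (rule Bochner_Integration.integrable_bound)
      show "integrable (lebesgue_on {0..2*pi}) (\<lambda>t. B\<^sup>2 * (cmod (f t))\<^sup>2)"
        using f unfolding L2T_def by auto
      show "(\<lambda>t. (cmod (c t * f t))\<^sup>2) \<in> borel_measurable (lebesgue_on {0..2*pi})"
        using m by measurable
      show "AE x in lebesgue_on {0..2*pi}. norm ((cmod (c x * f x))\<^sup>2) \<le> norm (B\<^sup>2 * (cmod (f x))\<^sup>2)"
      proof (rule AE_I2)
        fix x assume "x \<in> space (lebesgue_on {0..2*pi})"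
        then have "cmod (c x) \<le> B" using B by auto
        then have "cmod (c x) * cmod (f x) \<le> B * cmod (f x)"
          by (simp add: mult_right_mono)
        then have "(cmod (c x) * cmod (f x))\<^sup>2 \<le> (B * cmod (f x))\<^sup>2"
          by (intro power_mono) auto
        then show "norm ((cmod (c x * f x))\<^sup>2) \<le> norm (B\<^sup>2 * (cmod (f x))\<^sup>2)"
          by (simp add: norm_mult power_mult_distrib)
      qed
    qed
  qed
qed

lemma L2T_add:
  assumes f: "L2T f" and g: "L2T g"
  shows "L2T (\<lambda>t. f t + g t)"
proof -
  have fm: "f \<in> borel_measurable (lebesgue_on {0..2*pi})" using f unfolding L2T_def by auto
  have gm: "g \<in> borel_measurable (lebesgue_on {0..2*pi})" using g unfolding L2T_def by auto
  have m: "(\<lambda>t. f t + g t) \<in> borel_measurable (lebesgue_on {0..2*pi})"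
    using fm gm by measurable
  show ?thesis unfolding L2T_def
  proof
    show "(\<lambda>t. f t + g t) \<in> borel_measurable (lebesgue_on {0..2*pi})" by (rule m)
    show "integrable (lebesgue_on {0..2*pi}) (\<lambda>t. (cmod (f t + g t))\<^sup>2)"
    proof (rule Bochner_Integration.integrable_bound)
      show "integrable (lebesgue_on {0..2*pi}) (\<lambda>t. 2 * (cmod (f t))\<^sup>2 + 2 * (cmod (g t))\<^sup>2)"
        using f g unfolding L2T_def by auto
      show "(\<lambda>t. (cmod (f t + g t))\<^sup>2) \<in> borel_measurable (lebesgue_on {0..2*pi})"
        using m by measurable
      show "AE x in lebesgue_on {0..2*pi}. norm ((cmod (f x + g x))\<^sup>2) \<le> norm (2 * (cmod (f x))\<^sup>2 + 2 * (cmod (g x))\<^sup>2)"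
      proof (rule AE_I2)
        fix x
        have "cmod (f x + g x) \<le> cmod (f x) + cmod (g x)" by (rule norm_triangle_ineq)
        then have "(cmod (f x + g x))\<^sup>2 \<le> (cmod (f x) + cmod (g x))\<^sup>2"
          by (intro power_mono) auto
        also have "\<dots> \<le> 2 * (cmod (f x))\<^sup>2 + 2 * (cmod (g x))\<^sup>2"
          by (rule aux_sq2)
        finally show "norm ((cmod (f x + g x))\<^sup>2) \<le> norm (2 * (cmod (f x))\<^sup>2 + 2 * (cmod (g x))\<^sup>2)"
          by simp
      qed
    qed
  qed
qed

lemma L2T_cmult: "L2T f \<Longrightarrow> L2T (\<lambda>t. a * f t)"
  using L2T_mult[of "\<lambda>_. a" f] by auto

lemma L2T_diff: "L2T f \<Longrightarrow> L2T g \<Longrightarrow> L2T (\<lambda>t. f t - g t)"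
proof -
  assume f: "L2T f" and g: "L2T g"
  have "L2T (\<lambda>t. f t + (-1) * g t)" by (rule L2T_add[OF f L2T_cmult[OF g]])
  then show ?thesis by simp
qed

lemma fcoef_integrable:
  assumes "L2T f"
  shows "integrable (lebesgue_on {0..2*pi}) (\<lambda>t. f t * exp (- \<i> * of_int u * of_real t))"
proof -
  have "L2T (\<lambda>t. exp (- \<i> * of_int u * of_real t) * f t)"
    by (rule L2T_mult[OF _ assms]) (intro continuous_intros)
  from L2T_integrable[OF this] show ?thesis by (simp add: mult.commute)
qed

lemma fcoef_add: "L2T f \<Longrightarrow> L2T g \<Longrightarrow> fcoef (\<lambda>t. f t + g t) u = fcoef f u + fcoef g u"
proof -
  assume f: "L2T f" and g: "L2T g"
  note i1 = fcoef_integrable[OF f, of u] and i2 = fcoef_integrable[OF g, of u]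
  show ?thesis
    unfolding fcoef_def distrib_right
    by (simp only: Bochner_Integration.integral_add[OF i1 i2] distrib_left)
qed

lemma fcoef_cmult: "fcoef (\<lambda>t. a * f t) u = a * fcoef f u"
  unfolding fcoef_def by (simp add: mult.assoc)

lemma fcoef_diff: "L2T f \<Longrightarrow> L2T g \<Longrightarrow> fcoef (\<lambda>t. f t - g t) u = fcoef f u - fcoef g u"
proof -
  assume f: "L2T f" and g: "L2T g"
  have e1: "(\<lambda>t. f t - g t) = (\<lambda>t. f t + (-1) * g t)" by simp
  have "fcoef (\<lambda>t. f t + (-1) * g t) u = fcoef f u + fcoef (\<lambda>t. (-1) * g t) u"
    by (rule fcoef_add[of f "\<lambda>t. (-1) * g t" u, OF f L2T_cmult[of g "-1", OF g]])
  also have "fcoef (\<lambda>t. (-1) * g t) u = (-1) * fcoef g u" by (rule fcoef_cmult)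
  finally show ?thesis unfolding e1 by simp
qed

lemma fcoef_shift: "fcoef (\<lambda>t. ech k t * f t) u = fcoef f (u - k)"
proof -
  have e: "\<And>t. ech k t * exp (- \<i> * of_int u * of_real t) = exp (- \<i> * of_int (u - k) * of_real t)"
    unfolding ech_def mult_exp_exp by (rule arg_cong[where f=exp]) (simp add: algebra_simps)
  have h: "\<And>t. ech k t * f t * exp (- \<i> * of_int u * of_real t) = f t * exp (- \<i> * of_int (u - k) * of_real t)"
  proof -
    fix t
    have "ech k t * f t * exp (- \<i> * of_int u * of_real t) = f t * (ech k t * exp (- \<i> * of_int u * of_real t))"
      by (simp add: ac_simps)
    then show "ech k t * f t * exp (- \<i> * of_int u * of_real t) = f t * exp (- \<i> * of_int (u - k) * of_real t)"
      by (simp only: e)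
  qed
  show ?thesis unfolding fcoef_def by (simp only: h)
qed

lemma fcoef_bound: "\<exists>C. \<forall>u. cmod (fcoef f u) \<le> C"
proof -
  have "cmod (fcoef f u) \<le> (1 / (2*pi)) * (\<integral>t. norm (f t) \<partial>lebesgue_on {0..2*pi})" for u
  proof -
    have "cmod (fcoef f u) = (1 / (2*pi)) * norm (integral\<^sup>L (lebesgue_on {0..2*pi}) (\<lambda>t. f t * exp (- \<i> * of_int u * of_real t)))"
      unfolding fcoef_def by (simp add: norm_mult norm_divide)
    also have "\<dots> \<le> (1 / (2*pi)) * (\<integral>t. norm (f t * exp (- \<i> * of_int u * of_real t)) \<partial>lebesgue_on {0..2*pi})"
      by (intro mult_left_mono integral_norm_bound) auto
    also have "(\<lambda>t. norm (f t * exp (- \<i> * of_int u * of_real t))) = (\<lambda>t. norm (f t))"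
      by (simp add: norm_mult)
    finally show ?thesis .
  qed
  then show ?thesis by blast
qed

lemma integral_exp_aux:
  assumes "T \<ge> 0" "a \<noteq> 0"
  shows "integral {0..T} (\<lambda>t. exp(a * complex_of_real t)) = (exp(a * of_real T) - 1) / a"
proof -
  have "\<And>t. t \<in> {0..T} \<Longrightarrow> ((\<lambda>x. exp (a * x) / a) has_vector_derivative exp (a * t)) (at t within {0..T})"
    using assms
    by (intro derivative_eq_intros has_complex_derivative_imp_has_vector_derivative [unfolded o_def] | simp)+
  then have "((\<lambda>t. exp(a * of_real t)) has_integral exp(a * complex_of_real T)/a - exp(a * of_real 0)/a)  {0..T}"
    by (meson fundamental_theorem_of_calculus \<open>T \<ge> 0\<close>)
  then show ?thesis
    by (simp add: diff_divide_distrib integral_unique)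
qed

lemma fcoef_one: "fcoef (\<lambda>t. 1) v = (if v = 0 then 1 else 0)"
proof -
  have int: "integrable (lebesgue_on {0..2*pi}) (\<lambda>t. 1 * exp (- \<i> * of_int v * of_real t))"
    by (rule continuous_imp_integrable_real) (intro continuous_intros)
  have eq: "integral\<^sup>L (lebesgue_on {0..2*pi}) (\<lambda>t. 1 * exp (- \<i> * of_int v * of_real t))
      = integral {0..2*pi} (\<lambda>t. exp ((- \<i> * of_int v) * of_real t))"
    using lebesgue_integral_eq_integral[OF int] by simp
  show ?thesis
  proof (cases "v = 0")
    case True
    then show ?thesis unfolding fcoef_def eq by (simp add: scaleR_conv_of_real field_simps)
  next
    case False
    then have a: "- \<i> * of_int v \<noteq> 0" by simp
    have "exp ((- \<i> * of_int v) * of_real (2*pi)) = exp ((2 * of_int (-v) * pi) * \<i>)"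
      by (rule arg_cong[where f=exp]) (simp add: algebra_simps)
    also have "\<dots> = 1" by (rule exp_integer_2pi) simp
    finally have "integral {0..2*pi} (\<lambda>t. exp ((- \<i> * of_int v) * of_real t)) = 0"
      using integral_exp_aux[OF _ a, of "2*pi"] by simp
    then show ?thesis using False unfolding fcoef_def eq by simp
  qed
qed

lemma fcoef_ech: "fcoef (ech j) u = (if u = j then 1 else 0)"
proof -
  have "fcoef (ech j) u = fcoef (\<lambda>t. ech j t * 1) u" by simp
  also have "\<dots> = fcoef (\<lambda>t. 1) (u - j)" by (rule fcoef_shift)
  finally show ?thesis by (simp add: fcoef_one)
qed

lemma norm_ech [simp]: "cmod (ech k t) = 1"
proof -
  have "ech k t = exp (\<i> * of_real (of_int k * t))" unfolding ech_def by (simp add: mult.assoc)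
  then show ?thesis by (simp only: norm_exp_i_times)
qed

lemma cont_ech [continuous_intros]: "continuous_on A (ech k)"
  unfolding ech_def by (intro continuous_intros)

lemma cont_ech' [continuous_intros]: "continuous_on A f \<Longrightarrow> continuous_on A (\<lambda>x. ech k (f x))"
  unfolding ech_def by (intro continuous_intros)

lemma CL_add: "f \<in> CL U \<Longrightarrow> g \<in> CL U \<Longrightarrow> (\<lambda>t. f t + g t) \<in> CL U"
  unfolding CL_def by (auto simp: fcoef_add L2T_add)

lemma CL_diff: "f \<in> CL U \<Longrightarrow> g \<in> CL U \<Longrightarrow> (\<lambda>t. f t - g t) \<in> CL U"
  unfolding CL_def by (auto simp: fcoef_diff L2T_diff)

lemma CL_cmult: "f \<in> CL U \<Longrightarrow> (\<lambda>t. a * f t) \<in> CL U"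
  unfolding CL_def by (auto simp: fcoef_cmult L2T_cmult)

lemma CL_zero: "(\<lambda>t. 0) \<in> CL U"
proof -
  have "L2T (\<lambda>t. 0)" by (rule L2T_cont) simp
  moreover have "fcoef (\<lambda>t. 0) u = 0" for u
    using fcoef_cmult[of 0 "\<lambda>t. 0" u] by simp
  ultimately show ?thesis unfolding CL_def by auto
qed

lemma CL_shift: "f \<in> CL U \<Longrightarrow> (\<And>u. u \<in> U \<Longrightarrow> u - k \<in> U) \<Longrightarrow> (\<lambda>t. ech k t * f t) \<in> CL U"
  unfolding CL_def by (auto simp: fcoef_shift intro!: L2T_mult continuous_intros)

lemma CL_ech: "k \<notin> U \<Longrightarrow> ech k \<in> CL U"
  unfolding CL_def by (auto simp: fcoef_ech intro!: L2T_cont continuous_intros)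

lemma CL_sum: "finite I \<Longrightarrow> (\<And>i. i \<in> I \<Longrightarrow> f i \<in> CL U) \<Longrightarrow> (\<lambda>t. \<Sum>i\<in>I. f i t) \<in> CL U"
proof (induction I rule: finite_induct)
  case empty then show ?case by (simp add: CL_zero)
next
  case (insert x F)
  then show ?case by (simp add: CL_add)
qed

lemma geo_zero:
  fixes x :: complex
  assumes "\<And>n. cmod x \<le> r ^ n * C" "0 \<le> r" "r < 1"
  shows "x = 0"
proof (rule ccontr)
  assume x: "x \<noteq> 0"
  then have "0 < cmod x" by simp
  moreover have "cmod x \<le> C" using assms(1)[of 0] by simp
  ultimately have C: "C > 0" by linarith
  from x C have "cmod x / C > 0" by simp
  from real_arch_pow_inv[OF this assms(3)] obtain n where "r ^ n < cmod x / C" by blast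
  then have "r ^ n * C < cmod x" using C by (simp add: field_simps)
  with assms(1)[of n] show False by simp
qed

lemma CL_div:
  assumes f: "f \<in> CL U" and b: "cmod \<beta> < 1" and U: "\<And>u. u \<in> U \<Longrightarrow> u - k \<in> U"
  shows "(\<lambda>t. f t / (1 - \<beta> * ech k t)) \<in> CL U"
proof -
  define m where "m = (\<lambda>t. f t / (1 - \<beta> * ech k t))"
  have nz: "1 - \<beta> * ech k t \<noteq> 0" for t
  proof -
    have "cmod (\<beta> * ech k t) < 1" using b by (simp add: norm_mult)
    then have "\<beta> * ech k t \<noteq> 1" by auto
    then show ?thesis by simp
  qed
  have nz': "\<beta> * ech k t \<noteq> 1" for t using nz[of t] by simp
  have fL: "L2T f" using f unfolding CL_def by auto
  have mL: "L2T m"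
  proof -
    have "L2T (\<lambda>t. (1 / (1 - \<beta> * ech k t)) * f t)"
      by (rule L2T_mult[OF _ fL]) (intro continuous_intros, auto simp: nz')
    then show ?thesis unfolding m_def by simp
  qed
  have ff: "f = (\<lambda>t. m t - \<beta> * (ech k t * m t))"
  proof (rule ext)
    fix t
    have "m t - \<beta> * (ech k t * m t) = (1 - \<beta> * ech k t) * m t" by (simp add: algebra_simps)
    also have "\<dots> = f t" unfolding m_def using nz[of t] by simp
    finally show "f t = m t - \<beta> * (ech k t * m t)" by simp
  qed
  have L2: "L2T (\<lambda>t. \<beta> * (ech k t * m t))"
    by (intro L2T_cmult L2T_mult[OF _ mL] continuous_intros)
  have rec: "fcoef m u = \<beta> * fcoef m (u - k)" if "u \<in> U" for u
  proof -
    have "fcoef f u = fcoef m u - \<beta> * fcoef m (u - k)"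
      by (subst ff, subst fcoef_diff[OF mL L2]) (simp add: fcoef_cmult fcoef_shift)
    moreover have "fcoef f u = 0" using f that unfolding CL_def by auto
    ultimately show ?thesis by simp
  qed
  have it: "fcoef m u = \<beta> ^ n * fcoef m (u - of_nat n * k)" if "u \<in> U" for u n
    using that
  proof (induction n arbitrary: u)
    case 0 then show ?case by simp
  next
    case (Suc n)
    have "fcoef m u = \<beta> * fcoef m (u - k)" by (rule rec[OF Suc.prems])
    also have "fcoef m (u - k) = \<beta> ^ n * fcoef m (u - k - of_nat n * k)"
      by (rule Suc.IH) (rule U[OF Suc.prems])
    finally show ?case by (simp add: algebra_simps)
  qed
  obtain C where C: "\<And>u. cmod (fcoef m u) \<le> C" using fcoef_bound by blast
  have "fcoef m u = 0" if "u \<in> U" for u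
  proof (rule geo_zero)
    fix n
    have "cmod (fcoef m u) = cmod \<beta> ^ n * cmod (fcoef m (u - of_nat n * k))"
      by (subst it[OF that, of n]) (simp add: norm_mult norm_power)
    also have "\<dots> \<le> cmod \<beta> ^ n * C" by (intro mult_left_mono C) simp
    finally show "cmod (fcoef m u) \<le> cmod \<beta> ^ n * C" .
  qed (use b in auto)
  with mL show ?thesis unfolding CL_def m_def[symmetric] by auto
qed

definition hb :: "complex poly \<Rightarrow> complex poly \<Rightarrow> bool" where
  "hb A B \<longleftrightarrow> (\<exists>u v. u * A + v * B = 1)"

lemma hb_sym: "hb A B \<Longrightarrow> hb B A"
  unfolding hb_def by (metis add.commute)

lemma hb_one: "hb A 1"
  unfolding hb_def by (rule exI[of _ 0], rule exI[of _ 1]) simp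

lemma hb_mult: assumes "hb A B" "hb A C" shows "hb A (B * C)"
proof -
  obtain u1 v1 where 1: "u1 * A + v1 * B = 1" using assms(1) unfolding hb_def by blast
  obtain u2 v2 where 2: "u2 * A + v2 * C = 1" using assms(2) unfolding hb_def by blast
  have "(u1 * A + v1 * B) * (u2 * A + v2 * C) = 1" using 1 2 by simp
  then have "(u1 * u2 * A + u1 * v2 * C + v1 * B * u2) * A + (v1 * v2) * (B * C) = 1"
    by (simp add: algebra_simps)
  then show ?thesis unfolding hb_def by blast
qed

lemma hb_power: "hb A B \<Longrightarrow> hb A (B ^ n)"
  by (induction n) (auto simp: hb_one hb_mult)

lemma hb_prod: "finite J \<Longrightarrow> (\<And>j. j \<in> J \<Longrightarrow> hb A (f j)) \<Longrightarrow> hb A (\<Prod>j\<in>J. f j)"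
  by (induction J rule: finite_induct) (auto simp: hb_one hb_mult)

lemma hb_lin: "a \<noteq> b \<Longrightarrow> hb [:1, -a:] [:1, -b:]"
proof -
  assume ab: "a \<noteq> b"
  then have ba: "b - a \<noteq> 0" by simp
  define u where "u = b / (b - a)"
  define v where "v = - a / (b - a)"
  have 1: "u + v = 1" using ba unfolding u_def v_def by (simp add: diff_divide_distrib[symmetric])
  have 2: "u * a + v * b = 0" using ba unfolding u_def v_def by (simp add: field_simps)
  have "[:u:] * [:1, -a:] + [:v:] * [:1, -b:] = [:u + v, - (u * a + v * b):]" by (simp add: algebra_simps)
  also have "\<dots> = 1" by (simp add: 1 2 one_pCons)
  finally show ?thesis unfolding hb_def by blast
qed

lemma hb_x: "hb [:0, 1:] [:1, -b:]"
  unfolding hb_def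
  by (rule exI[of _ "[:b:]"], rule exI[of _ 1]) (simp add: one_pCons)

lemma bez_deg:
  fixes A B R :: "complex poly"
  assumes hb: "hb A B" and A: "A \<noteq> 0" and B: "B \<noteq> 0"
    and R: "R = 0 \<or> degree R < degree A + degree B"
  shows "\<exists>X Y. R = X * A + Y * B \<and> (X = 0 \<or> degree X < degree B) \<and> (Y = 0 \<or> degree Y < degree A)"
proof -
  obtain u v where uv: "u * A + v * B = 1" using hb unfolding hb_def by blast
  define X where "X = (R * u) mod B"
  define k where "k = (R * u) div B"
  define Y where "Y = R * v + k * A"
  have Ru: "R * u = k * B + X" unfolding X_def k_def by simp
  have eq: "R = X * A + Y * B"
  proof -
    have "R = R * (u * A + v * B)" using uv by simp
    also have "\<dots> = (R * u) * A + (R * v) * B" by (simp add: algebra_simps)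
    also have "\<dots> = X * A + Y * B" unfolding Ru Y_def by (simp add: algebra_simps)
    finally show ?thesis .
  qed
  have Xd: "X = 0 \<or> degree X < degree B" unfolding X_def using degree_mod_less[OF B] by blast
  have Yd: "Y = 0 \<or> degree Y < degree A"
  proof (cases "Y = 0")
    case True then show ?thesis by simp
  next
    case False
    have YB: "Y * B = R - X * A" using eq by (simp add: algebra_simps)
    have "Y * B \<noteq> 0" using False B by simp
    then have ne: "R - X * A \<noteq> 0" using YB by simp
    have dYB: "degree (Y * B) = degree Y + degree B" using False B by (rule degree_mult_eq)
    have "degree (R - X * A) < degree A + degree B"
    proof -
      have pos: "0 < degree A + degree B"
      proof (rule ccontr)
        assume "\<not> 0 < degree A + degree B"
        then have "degree A = 0" "degree B = 0" by auto
        then have "R = 0" using R by auto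
        moreover from Xd \<open>degree B = 0\<close> have "X = 0" by auto
        ultimately show False using ne by simp
      qed
      have "degree R \<le> degree A + degree B - 1" using R pos by auto
      moreover have "degree (X * A) \<le> degree A + degree B - 1"
      proof (cases "X = 0")
        case True then show ?thesis by simp
      next
        case False
        then have "degree (X * A) = degree X + degree A" using A by (rule degree_mult_eq)
        then show ?thesis using Xd False by auto
      qed
      ultimately have "degree (R - X * A) \<le> degree A + degree B - 1" by (rule degree_diff_le)
      then show ?thesis using pos by linarith
    qed
    then show ?thesis using YB dYB by auto
  qed
  show ?thesis using eq Xd Yd by blast
qed

lemma poly_L [simp]: "poly [:1, - b:] z = 1 - b * (z::complex)"
  by (simp add: algebra_simps)

lemma expand_L:
  fixes b :: complex
  assumes b: "b \<noteq> 0"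
  shows "X = 0 \<or> degree X < s \<Longrightarrow> \<exists>c. \<forall>z. 1 - b * z \<noteq> 0 \<longrightarrow>
            poly X z / (1 - b * z) ^ s = (\<Sum>n\<in>{1..s}. c n / (1 - b * z) ^ n)"
proof (induction s arbitrary: X)
  case 0
  then have "X = 0" by auto
  then show ?case by simp
next
  case (Suc s)
  define L where "L = [:1, - b:]"
  have L0: "L \<noteq> 0" and dL: "degree L = 1" unfolding L_def using b by auto
  define q where "q = X div L"
  define r where "r = X mod L"
  have X: "X = q * L + r" unfolding q_def r_def by simp
  have "r = 0 \<or> degree r < 1" unfolding r_def using degree_mod_less[OF L0] dL by auto
  then have "degree r = 0" by auto
  then have r: "r = [:coeff r 0:]" by (simp add: degree_0_id)
  have qd: "q = 0 \<or> degree q < s"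
  proof (cases "q = 0")
    case True then show ?thesis by simp
  next
    case False
    have dq: "degree (q * L) = degree q + 1" using False L0 dL by (simp add: degree_mult_eq)
    have "X \<noteq> 0"
    proof
      assume "X = 0"
      then have "q * L = - r" using X by (simp add: eq_neg_iff_add_eq_0)
      then have "degree (q * L) = 0" using \<open>degree r = 0\<close> by simp
      with dq show False by simp
    qed
    then have dX: "degree X < Suc s" using Suc.prems by auto
    have "degree X = degree (q * L)"
      unfolding X by (rule degree_add_eq_left) (use dq \<open>degree r = 0\<close> in simp)
    then show ?thesis using dX dq by simp
  qed
  from Suc.IH[OF qd] obtain c where c:
    "\<And>z. 1 - b * z \<noteq> 0 \<Longrightarrow> poly q z / (1 - b * z) ^ s = (\<Sum>n\<in>{1..s}. c n / (1 - b * z) ^ n)"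
    by blast
  define c' where "c' = c(Suc s := coeff r 0)"
  show ?case
  proof (intro exI[of _ c'] allI impI)
    fix z assume z: "1 - b * z \<noteq> 0"
    have "poly X z = poly q z * (1 - b * z) + coeff r 0"
      by (subst X, subst r) (simp add: L_def algebra_simps)
    then have "poly X z / (1 - b * z) ^ Suc s = ((1 - b * z) * poly q z + coeff r 0) / ((1 - b * z) * (1 - b * z) ^ s)"
      by (simp add: mult.commute)
    also have "\<dots> = ((1 - b * z) * poly q z) / ((1 - b * z) * (1 - b * z) ^ s) + coeff r 0 / (1 - b * z) ^ Suc s"
      by (simp add: add_divide_distrib)
    also have "((1 - b * z) * poly q z) / ((1 - b * z) * (1 - b * z) ^ s) = poly q z / (1 - b * z) ^ s"
      using z by (rule nonzero_mult_divide_mult_cancel_left)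
    finally have "poly X z / (1 - b * z) ^ Suc s = poly q z / (1 - b * z) ^ s + coeff r 0 / (1 - b * z) ^ Suc s" .
    also have "\<dots> = (\<Sum>n\<in>{1..s}. c n / (1 - b * z) ^ n) + coeff r 0 / (1 - b * z) ^ Suc s"
      using c[OF z] by simp
    also have "(\<Sum>n\<in>{1..s}. c n / (1 - b * z) ^ n) = (\<Sum>n\<in>{1..s}. c' n / (1 - b * z) ^ n)"
      unfolding c'_def by (intro sum.cong) auto
    also have "\<dots> + coeff r 0 / (1 - b * z) ^ Suc s = (\<Sum>n\<in>{1..Suc s}. c' n / (1 - b * z) ^ n)"
      by (simp add: c'_def)
    finally show "poly X z / (1 - b * z) ^ Suc s = (\<Sum>n\<in>{1..Suc s}. c' n / (1 - b * z) ^ n)" .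
  qed
qed

lemma L_nz [simp]: "[:1, - (b::complex):] \<noteq> 0" by simp

lemma prod_L_nz: "(\<Prod>j<(n::nat). [:1, - (\<beta> j::complex):] ^ s j) \<noteq> 0"
  by (induction n) auto

lemma poly_prod_L: "poly (\<Prod>j<n. [:1, - \<beta> j:] ^ s j) z = (\<Prod>j<n. (1 - \<beta> j * (z::complex)) ^ s j)"
  by (simp add: poly_prod poly_power mult.commute)

lemma pf:
  fixes \<beta> :: "nat \<Rightarrow> complex" and s :: "nat \<Rightarrow> nat"
  shows "inj_on \<beta> {..<\<sigma>} \<Longrightarrow> (\<forall>j<\<sigma>. \<beta> j \<noteq> 0) \<Longrightarrow>
    X = 0 \<or> degree X < degree (\<Prod>j<\<sigma>. [:1, - \<beta> j:] ^ s j) \<Longrightarrow>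
    \<exists>a. \<forall>z. (\<forall>j<\<sigma>. 1 - \<beta> j * z \<noteq> 0) \<longrightarrow>
      poly X z / poly (\<Prod>j<\<sigma>. [:1, - \<beta> j:] ^ s j) z = (\<Sum>j<\<sigma>. \<Sum>n\<in>{1..s j}. a j n / (1 - \<beta> j * z) ^ n)"
proof (induction \<sigma> arbitrary: X)
  case 0
  then have "X = 0" by simp
  then show ?case by simp
next
  case (Suc \<sigma>)
  define A where "A = (\<Prod>j<\<sigma>. [:1, - \<beta> j:] ^ s j)"
  define B where "B = [:1, - \<beta> \<sigma>:] ^ s \<sigma>"
  have AB: "(\<Prod>j<Suc \<sigma>. [:1, - \<beta> j:] ^ s j) = A * B" unfolding A_def B_def by simp
  have inj: "inj_on \<beta> {..<\<sigma>}" using Suc.prems(1) by (rule inj_on_subset) auto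
  have nz: "\<forall>j<\<sigma>. \<beta> j \<noteq> 0" using Suc.prems(2) by auto
  have bs: "\<beta> \<sigma> \<noteq> 0" using Suc.prems(2) by auto
  have dist: "\<beta> j \<noteq> \<beta> \<sigma>" if "j < \<sigma>" for j
  proof
    assume "\<beta> j = \<beta> \<sigma>"
    from inj_onD[OF Suc.prems(1) this] that have "j = \<sigma>" by auto
    with that show False by simp
  qed
  have A0: "A \<noteq> 0" unfolding A_def by (rule prod_L_nz)
  have B0: "B \<noteq> 0" unfolding B_def by simp
  have dB: "degree B = s \<sigma>" unfolding B_def using bs by (simp add: degree_power_eq)
  have hbBA: "hb B A" unfolding A_def
  proof (rule hb_prod)
    fix j assume "j \<in> {..<\<sigma>}"
    then have "j < \<sigma>" by simp
    then have "\<beta> j \<noteq> \<beta> \<sigma>" by (rule dist)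
    then have "\<beta> \<sigma> \<noteq> \<beta> j" by (rule not_sym)
    then have "hb [:1, - \<beta> \<sigma>:] [:1, - \<beta> j:]" by (rule hb_lin)
    then have "hb [:1, - \<beta> \<sigma>:] ([:1, - \<beta> j:] ^ s j)" by (rule hb_power)
    then have "hb ([:1, - \<beta> j:] ^ s j) [:1, - \<beta> \<sigma>:]" by (rule hb_sym)
    then have "hb ([:1, - \<beta> j:] ^ s j) B" unfolding B_def by (rule hb_power)
    then show "hb B ([:1, - \<beta> j:] ^ s j)" by (rule hb_sym)
  qed simp
  have Xd: "X = 0 \<or> degree X < degree A + degree B"
    using Suc.prems(3) unfolding AB using degree_mult_eq[OF A0 B0] by simp
  from bez_deg[OF hb_sym[OF hbBA] A0 B0 Xd] obtain X1 Y1 where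
    XY: "X = X1 * A + Y1 * B" and X1: "X1 = 0 \<or> degree X1 < degree B" and Y1: "Y1 = 0 \<or> degree Y1 < degree A"
    by blast
  from Suc.IH[OF inj nz] Y1 obtain a where a:
    "\<And>z. (\<forall>j<\<sigma>. 1 - \<beta> j * z \<noteq> 0) \<Longrightarrow> poly Y1 z / poly A z = (\<Sum>j<\<sigma>. \<Sum>n\<in>{1..s j}. a j n / (1 - \<beta> j * z) ^ n)"
    unfolding A_def by blast
  from expand_L[OF bs, of X1 "s \<sigma>"] X1 dB obtain c where c:
    "\<And>z. 1 - \<beta> \<sigma> * z \<noteq> 0 \<Longrightarrow> poly X1 z / (1 - \<beta> \<sigma> * z) ^ s \<sigma> = (\<Sum>n\<in>{1..s \<sigma>}. c n / (1 - \<beta> \<sigma> * z) ^ n)"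
    by auto
  define a' where "a' = (\<lambda>j. if j = \<sigma> then c else a j)"
  show ?case
  proof (intro exI[of _ a'] allI impI)
    fix z assume z: "\<forall>j<Suc \<sigma>. 1 - \<beta> j * z \<noteq> 0"
    then have zA: "\<forall>j<\<sigma>. 1 - \<beta> j * z \<noteq> 0" and zB: "1 - \<beta> \<sigma> * z \<noteq> 0" by auto
    have pA: "poly A z \<noteq> 0" unfolding A_def poly_prod_L using zA by (simp add: prod_zero_iff)
    have pB: "poly B z = (1 - \<beta> \<sigma> * z) ^ s \<sigma>" unfolding B_def by (simp add: poly_power algebra_simps)
    have pB0: "poly B z \<noteq> 0" using pB zB by simp
    have "poly X z / poly (A * B) z = poly X1 z / poly B z + poly Y1 z / poly A z"
      unfolding XY using pA pB0 by (simp add: field_simps)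
    also have "\<dots> = (\<Sum>n\<in>{1..s \<sigma>}. c n / (1 - \<beta> \<sigma> * z) ^ n) + (\<Sum>j<\<sigma>. \<Sum>n\<in>{1..s j}. a j n / (1 - \<beta> j * z) ^ n)"
      using c[OF zB] a[OF zA] pB by simp
    also have "\<dots> = (\<Sum>j<Suc \<sigma>. \<Sum>n\<in>{1..s j}. a' j n / (1 - \<beta> j * z) ^ n)"
      unfolding a'_def by (simp add: add.commute)
    finally show "poly X z / poly (\<Prod>j<Suc \<sigma>. [:1, - \<beta> j:] ^ s j) z = (\<Sum>j<Suc \<sigma>. \<Sum>n\<in>{1..s j}. a' j n / (1 - \<beta> j * z) ^ n)"
      unfolding AB .
  qed
qed

lemma E_poly:
  fixes \<beta> :: "nat \<Rightarrow> complex" and s :: "nat \<Rightarrow> nat" and a :: "nat \<Rightarrow> nat \<Rightarrow> complex"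
  shows "\<exists>P. \<forall>z. (\<forall>j<\<sigma>. 1 - \<beta> j * z \<noteq> 0) \<longrightarrow>
      (\<Sum>j<\<sigma>. \<Sum>n\<in>{1..s j}. a j n / (1 - \<beta> j * z) ^ n) = poly P z / poly (\<Prod>j<\<sigma>. [:1, - \<beta> j:] ^ s j) z"
proof (induction \<sigma>)
  case 0
  show ?case by (rule exI[of _ 0]) simp
next
  case (Suc \<sigma>)
  then obtain P where P: "\<And>z. (\<forall>j<\<sigma>. 1 - \<beta> j * z \<noteq> 0) \<Longrightarrow>
      (\<Sum>j<\<sigma>. \<Sum>n\<in>{1..s j}. a j n / (1 - \<beta> j * z) ^ n) = poly P z / poly (\<Prod>j<\<sigma>. [:1, - \<beta> j:] ^ s j) z"
    by blast
  define A where "A = (\<Prod>j<\<sigma>. [:1, - \<beta> j:] ^ s j)"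
  define B where "B = [:1, - \<beta> \<sigma>:] ^ s \<sigma>"
  define Pn where "Pn = (\<Sum>n\<in>{1..s \<sigma>}. smult (a \<sigma> n) ([:1, - \<beta> \<sigma>:] ^ (s \<sigma> - n)))"
  have AB: "(\<Prod>j<Suc \<sigma>. [:1, - \<beta> j:] ^ s j) = A * B" unfolding A_def B_def by simp
  show ?case
  proof (intro exI[of _ "P * B + Pn * A"] allI impI)
    fix z assume z: "\<forall>j<Suc \<sigma>. 1 - \<beta> j * z \<noteq> 0"
    then have zA: "\<forall>j<\<sigma>. 1 - \<beta> j * z \<noteq> 0" and zB: "1 - \<beta> \<sigma> * z \<noteq> 0" by auto
    have pA: "poly A z \<noteq> 0" unfolding A_def poly_prod_L using zA by (simp add: prod_zero_iff)
    have pB: "poly B z = (1 - \<beta> \<sigma> * z) ^ s \<sigma>" unfolding B_def by (simp add: poly_power algebra_simps)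
    have pB0: "poly B z \<noteq> 0" using pB zB by simp
    have "(\<Sum>n\<in>{1..s \<sigma>}. a \<sigma> n / (1 - \<beta> \<sigma> * z) ^ n) = poly Pn z / poly B z"
    proof -
      have "poly Pn z / poly B z = (\<Sum>n\<in>{1..s \<sigma>}. a \<sigma> n * (1 - \<beta> \<sigma> * z) ^ (s \<sigma> - n) / (1 - \<beta> \<sigma> * z) ^ s \<sigma>)"
        unfolding Pn_def pB by (simp add: poly_sum poly_power sum_divide_distrib mult.commute)
      also have "\<dots> = (\<Sum>n\<in>{1..s \<sigma>}. a \<sigma> n / (1 - \<beta> \<sigma> * z) ^ n)"
      proof (intro sum.cong refl)
        fix n assume "n \<in> {1..s \<sigma>}"
        then have "(1 - \<beta> \<sigma> * z) ^ s \<sigma> = (1 - \<beta> \<sigma> * z) ^ (s \<sigma> - n) * (1 - \<beta> \<sigma> * z) ^ n"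
          by (simp add: power_add[symmetric])
        then show "a \<sigma> n * (1 - \<beta> \<sigma> * z) ^ (s \<sigma> - n) / (1 - \<beta> \<sigma> * z) ^ s \<sigma> = a \<sigma> n / (1 - \<beta> \<sigma> * z) ^ n"
          using zB by (simp add: field_simps)
      qed
      finally show ?thesis by simp
    qed
    moreover have "(\<Sum>j<\<sigma>. \<Sum>n\<in>{1..s j}. a j n / (1 - \<beta> j * z) ^ n) = poly P z / poly A z"
      unfolding A_def by (rule P[OF zA])
    ultimately have "(\<Sum>j<Suc \<sigma>. \<Sum>n\<in>{1..s j}. a j n / (1 - \<beta> j * z) ^ n) = poly P z / poly A z + poly Pn z / poly B z"
      by simp
    also have "\<dots> = poly (P * B + Pn * A) z / poly (A * B) z"
      using pA pB0 by (simp add: field_simps)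
    finally show "(\<Sum>j<Suc \<sigma>. \<Sum>n\<in>{1..s j}. a j n / (1 - \<beta> j * z) ^ n) = poly (P * B + Pn * A) z / poly (\<Prod>j<Suc \<sigma>. [:1, - \<beta> j:] ^ s j) z"
      unfolding AB .
  qed
qed

lemma chi_ech: "chi t = ech 1 t"
  unfolding chi_def ech_def by simp

lemma ech_mult: "ech a t * ech b t = ech (a + b) t"
  unfolding ech_def mult_exp_exp by (rule arg_cong[where f=exp]) (simp add: algebra_simps)

lemma ech_zero [simp]: "ech 0 t = 1"
  unfolding ech_def by simp

lemma chi_pow: "chi t ^ k = ech (int k) t"
proof -
  have "ech (int k) t = exp (of_nat k * (\<i> * of_real t))" unfolding ech_def by (simp add: ac_simps)
  also have "\<dots> = exp (\<i> * of_real t) ^ k" by (rule exp_of_nat_mult)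
  finally show ?thesis unfolding chi_def by simp
qed

lemma chi_nz [simp]: "chi t \<noteq> 0"
  unfolding chi_def by simp

lemma norm_chi [simp]: "cmod (chi t) = 1"
  unfolding chi_ech by simp

lemma cnj_chi: "cnj (chi t) = ech (-1) t"
  unfolding chi_def ech_def by (simp add: exp_cnj)

lemma inv_chi_pow: "inverse (chi t ^ k) = ech (- int k) t"
proof -
  have "chi t ^ k * ech (- int k) t = 1" unfolding chi_pow ech_mult by simp
  then show ?thesis by (simp add: inverse_unique)
qed

lemma CL_mono: "f \<in> CL U \<Longrightarrow> V \<subseteq> U \<Longrightarrow> f \<in> CL V"
  unfolding CL_def by auto

lemma CL_poly:
  assumes "\<And>k. coeff p k \<noteq> 0 \<Longrightarrow> int k + d \<notin> U"
  shows "(\<lambda>t. ech d t * poly p (chi t)) \<in> CL U"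
proof -
  have eq: "(\<lambda>t. ech d t * poly p (chi t)) = (\<lambda>t. \<Sum>k\<le>degree p. coeff p k * ech (int k + d) t)"
  proof (rule ext)
    fix t
    have "ech d t * poly p (chi t) = (\<Sum>k\<le>degree p. ech d t * (coeff p k * chi t ^ k))"
      by (simp add: poly_altdef sum_distrib_left)
    also have "\<dots> = (\<Sum>k\<le>degree p. coeff p k * ech (int k + d) t)"
    proof (intro sum.cong refl)
      fix k
      have "ech d t * (coeff p k * chi t ^ k) = coeff p k * (ech (int k) t * ech d t)"
        unfolding chi_pow by (simp add: ac_simps)
      then show "ech d t * (coeff p k * chi t ^ k) = coeff p k * ech (int k + d) t"
        by (simp add: ech_mult)
    qed
    finally show "ech d t * poly p (chi t) = (\<Sum>k\<le>degree p. coeff p k * ech (int k + d) t)" .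
  qed
  show ?thesis unfolding eq
  proof (rule CL_sum)
    fix k
    show "(\<lambda>t. coeff p k * ech (int k + d) t) \<in> CL U"
    proof (cases "coeff p k = 0")
      case True then show ?thesis using CL_zero by simp
    next
      case False
      then show ?thesis by (intro CL_cmult CL_ech assms)
    qed
  qed simp
qed

lemma CL_mul_pow:
  assumes f: "f \<in> CL U" and U: "\<And>u. u \<in> U \<Longrightarrow> u - k \<in> U"
  shows "(\<lambda>t. (1 - \<gamma> * ech k t) ^ m * f t) \<in> CL U"
proof (induction m)
  case 0 then show ?case using f by simp
next
  case (Suc m)
  define g where "g = (\<lambda>t. (1 - \<gamma> * ech k t) ^ m * f t)"
  have "(\<lambda>t. (1 - \<gamma> * ech k t) ^ Suc m * f t) = (\<lambda>t. g t - \<gamma> * (ech k t * g t))"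
    unfolding g_def by (rule ext) (simp add: algebra_simps)
  moreover have "(\<lambda>t. g t - \<gamma> * (ech k t * g t)) \<in> CL U"
    using Suc.IH unfolding g_def[symmetric]
    by (intro CL_diff CL_cmult CL_shift U)
  ultimately show ?case by simp
qed

lemma CL_mul_prod:
  assumes f: "f \<in> CL U" and U: "\<And>u. u \<in> U \<Longrightarrow> u - k \<in> U"
  shows "(\<lambda>t. (\<Prod>j<(n::nat). (1 - \<gamma> j * ech k t) ^ s j) * f t) \<in> CL U"
proof (induction n)
  case 0 then show ?case using f by simp
next
  case (Suc n)
  have "(\<lambda>t. (\<Prod>j<Suc n. (1 - \<gamma> j * ech k t) ^ s j) * f t) =
        (\<lambda>t. (1 - \<gamma> n * ech k t) ^ s n * ((\<Prod>j<n. (1 - \<gamma> j * ech k t) ^ s j) * f t))"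
    by (rule ext) (simp add: ac_simps)
  moreover have "\<dots> \<in> CL U" by (rule CL_mul_pow[OF Suc.IH U])
  ultimately show ?case by simp
qed

lemma CL_div_pow:
  assumes f: "f \<in> CL U" and b: "cmod \<gamma> < 1" and U: "\<And>u. u \<in> U \<Longrightarrow> u - k \<in> U"
  shows "(\<lambda>t. f t / (1 - \<gamma> * ech k t) ^ m) \<in> CL U"
proof (induction m)
  case 0 then show ?case using f by simp
next
  case (Suc m)
  have "(\<lambda>t. f t / (1 - \<gamma> * ech k t) ^ Suc m) = (\<lambda>t. (f t / (1 - \<gamma> * ech k t) ^ m) / (1 - \<gamma> * ech k t))"
    by (rule ext) (simp add: power_Suc2 divide_divide_eq_left)
  moreover have "\<dots> \<in> CL U" by (rule CL_div[OF Suc.IH b U])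
  ultimately show ?case by simp
qed

lemma CL_div_prod:
  assumes f: "f \<in> CL U" and b: "\<And>j. j < n \<Longrightarrow> cmod (\<gamma> j) < 1" and U: "\<And>u. u \<in> U \<Longrightarrow> u - k \<in> U"
  shows "(\<lambda>t. f t / (\<Prod>j<(n::nat). (1 - \<gamma> j * ech k t) ^ s j)) \<in> CL U"
  using b
proof (induction n)
  case 0 then show ?case using f by simp
next
  case (Suc n)
  have "(\<lambda>t. f t / (\<Prod>j<Suc n. (1 - \<gamma> j * ech k t) ^ s j)) =
        (\<lambda>t. (f t / (\<Prod>j<n. (1 - \<gamma> j * ech k t) ^ s j)) / (1 - \<gamma> n * ech k t) ^ s n)"
    by (rule ext) (simp add: divide_divide_eq_left)
  moreover have "\<dots> \<in> CL U"
    by (rule CL_div_pow[OF Suc.IH _ U]) (use Suc.prems in auto)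
  ultimately show ?case by simp
qed

theorem mainTheorem3:
  fixes \<sigma> :: nat and \<alpha> :: "nat \<Rightarrow> complex" and s :: "nat \<Rightarrow> nat" and N :: nat
  assumes "inj_on \<alpha> {..<\<sigma>}"
    and "\<And>i. i < \<sigma> \<Longrightarrow> 0 < cmod (\<alpha> i) \<and> cmod (\<alpha> i) < 1"
    and "\<And>i. i < \<sigma> \<Longrightarrow> s i > 0"
  shows "\<forall>e \<in> Espace \<sigma> \<alpha> s. \<forall>h.
           is_pi_minus (\<lambda>t. PhiN \<sigma> \<alpha> s N t * e t) h \<longrightarrow>
           (\<exists>e' \<in> Espace \<sigma> \<alpha> s. is_pi_plus (\<lambda>t. PhiTN \<sigma> \<alpha> s N t * h t) e')"
proof (intro ballI allI impI)
  fix e h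
  assume eE: "e \<in> Espace \<sigma> \<alpha> s"
  assume pm: "is_pi_minus (\<lambda>t. PhiN \<sigma> \<alpha> s N t * e t) h"
  define \<beta> where "\<beta> = (\<lambda>j. cnj (\<alpha> j))"
  define Bp where "Bp = (\<Prod>j<\<sigma>. [:1, - \<beta> j:] ^ s j)"
  define Qp where "Qp = (\<Prod>i<\<sigma>. [:- \<alpha> i, 1:] ^ s i)"
  define S where "S = (\<Sum>i<\<sigma>. s i)"
  define c where "c = cconst \<sigma> \<alpha> s"
  define M where "M = N + 1 + S"
  define G1 where "G1 = (\<lambda>t. \<Prod>j<\<sigma>. (1 - \<beta> j * ech 1 t) ^ s j)"
  define G2 where "G2 = (\<lambda>t. \<Prod>i<\<sigma>. (1 - \<alpha> i * ech (-1) t) ^ s i)"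
  define \<psi> where "\<psi> = (\<lambda>t. PhiN \<sigma> \<alpha> s N t * e t)"
  have a0: "\<alpha> i \<noteq> 0" if "i < \<sigma>" for i using assms(2)[OF that] by auto
  have a1: "cmod (\<alpha> i) < 1" if "i < \<sigma>" for i using assms(2)[OF that] by auto
  have b1: "cmod (\<beta> i) < 1" if "i < \<sigma>" for i using a1[OF that] unfolding \<beta>_def by simp
  have b0: "\<forall>j<\<sigma>. \<beta> j \<noteq> 0" using a0 unfolding \<beta>_def by simp
  have binj: "inj_on \<beta> {..<\<sigma>}" using assms(1) unfolding \<beta>_def inj_on_def by auto
  have bz: "1 - \<beta> j * chi t \<noteq> 0" if "j < \<sigma>" for j t
  proof -
    have "cmod (\<beta> j * chi t) < 1" using b1[OF that] by (simp add: norm_mult)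
    then have "\<beta> j * chi t \<noteq> 1" by auto
    then show ?thesis by simp
  qed
  have az: "chi t - \<alpha> i \<noteq> 0" if "i < \<sigma>" for i t
  proof
    assume "chi t - \<alpha> i = 0"
    then have "cmod (\<alpha> i) = 1" by (metis norm_chi right_minus_eq)
    with a1[OF that] show False by simp
  qed
  have c0: "c \<noteq> 0" unfolding c_def cconst_def using a0 by (simp add: prod_zero_iff)
  have G1_eq: "G1 t = poly Bp (chi t)" for t
    unfolding G1_def Bp_def poly_prod_L chi_ech ..
  have G1nz: "G1 t \<noteq> 0" for t
    unfolding G1_def using bz by (simp add: prod_zero_iff chi_ech)
  have g1_eq: "g1 \<sigma> \<alpha> s t = c * G1 t" for t
    unfolding g1_def c_def G1_def \<beta>_def chi_ech ..
  have g2_eq: "g2 \<sigma> \<alpha> s t = G2 t" for t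
    unfolding g2_def G2_def cnj_chi ..
  have polyQ: "poly Qp z = (\<Prod>i<\<sigma>. (z - \<alpha> i) ^ s i)" for z
    unfolding Qp_def by (simp add: poly_prod poly_power)
  have QG2: "poly Qp (chi t) = chi t ^ S * G2 t" for t
  proof -
    have "G2 t = (\<Prod>i<\<sigma>. ((chi t - \<alpha> i) / chi t) ^ s i)"
      unfolding G2_def
    proof (intro prod.cong refl)
      fix i
      have "1 - \<alpha> i * ech (-1) t = (chi t - \<alpha> i) / chi t"
        unfolding cnj_chi[symmetric] using chi_nz[of t]
        by (simp add: chi_def exp_cnj field_simps flip: exp_add)
      then show "(1 - \<alpha> i * ech (-1) t) ^ s i = ((chi t - \<alpha> i) / chi t) ^ s i" by simp
    qed
    also have "\<dots> = (\<Prod>i<\<sigma>. (chi t - \<alpha> i) ^ s i) / (\<Prod>i<\<sigma>. chi t ^ s i)"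
      by (simp add: power_divide prod_dividef)
    also have "(\<Prod>i<\<sigma>. chi t ^ s i) = chi t ^ S"
      unfolding S_def by (simp add: power_sum)
    finally show ?thesis using chi_nz[of t] by (simp add: polyQ field_simps)
  qed
  have Qnz: "poly Qp (chi t) \<noteq> 0" for t
    unfolding polyQ using az by (simp add: prod_zero_iff)
  have G2nz: "G2 t \<noteq> 0" for t using Qnz[of t] QG2[of t] by auto
  have Qp0: "Qp \<noteq> 0" unfolding Qp_def by (simp add: prod_zero_iff)
  have dQ: "degree Qp = S"
    unfolding Qp_def S_def
    by (subst degree_prod_eq_sum_degree) (auto simp: degree_linear_power)
  obtain a where ea: "e = (\<lambda>t. \<Sum>j<\<sigma>. \<Sum>n\<in>{1..s j}. a j n / (1 - cnj (\<alpha> j) * chi t) ^ n)"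
    using eE unfolding Espace_def by blast
  obtain P where P: "\<And>z. (\<forall>j<\<sigma>. 1 - \<beta> j * z \<noteq> 0) \<Longrightarrow>
      (\<Sum>j<\<sigma>. \<Sum>n\<in>{1..s j}. a j n / (1 - \<beta> j * z) ^ n) = poly P z / poly Bp z"
    using E_poly[where \<sigma>=\<sigma> and \<beta>=\<beta> and s=s and a=a] unfolding Bp_def by blast
  have eP: "e t = poly P (chi t) / G1 t" for t
    unfolding ea G1_eq using P[of "chi t"] bz unfolding \<beta>_def by simp
  define W where "W = smult c (monom 1 M * P)"
  define U where "U = W div Qp"
  define R where "R = W mod Qp"
  have WUR: "W = U * Qp + R" unfolding U_def R_def by simp
  have Rd: "R = 0 \<or> degree R < S" unfolding R_def dQ[symmetric] by (rule degree_mod_less[OF Qp0])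
  have psi_eq: "\<psi> t = poly W (chi t) / poly Qp (chi t)" for t
  proof -
    have "\<psi> t = chi t ^ (N + 1) * (c * G1 t) / G2 t * (poly P (chi t) / G1 t)"
      unfolding \<psi>_def PhiN_def g1_eq g2_eq eP ..
    also have "\<dots> = c * chi t ^ (N + 1) * chi t ^ S * poly P (chi t) / (chi t ^ S * G2 t)"
      using G1nz[of t] G2nz[of t] chi_nz[of t] by (simp add: field_simps)
    also have "\<dots> = poly W (chi t) / poly Qp (chi t)"
      unfolding QG2 W_def M_def by (simp add: poly_monom power_add ac_simps)
    finally show ?thesis .
  qed
  define h0 where "h0 = (\<lambda>t. poly R (chi t) / poly Qp (chi t))"
  have psih0: "(\<lambda>t. \<psi> t - h0 t) = (\<lambda>t. ech 0 t * poly U (chi t))"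
  proof (rule ext)
    fix t
    show "\<psi> t - h0 t = ech 0 t * poly U (chi t)"
      unfolding psi_eq h0_def WUR using Qnz[of t] by (simp add: field_simps)
  qed
  have Uplus: "(\<lambda>t. \<psi> t - h0 t) \<in> CL {u. u < 0}"
    unfolding psih0 by (rule CL_poly) simp
  have h0perp: "h0 \<in> CL {u. 0 \<le> u}"
  proof -
    have num: "(\<lambda>t. ech (- int S) t * poly R (chi t)) \<in> CL {u. 0 \<le> u}"
    proof (rule CL_poly)
      fix k assume "coeff R k \<noteq> 0"
      then have "R \<noteq> 0" "k \<le> degree R" by (auto intro: le_degree)
      then have "k < S" using Rd by auto
      then show "int k + - int S \<notin> {u. 0 \<le> u}" by simp
    qed
    have "(\<lambda>t. ech (- int S) t * poly R (chi t) / (\<Prod>i<\<sigma>. (1 - \<alpha> i * ech (-1) t) ^ s i)) \<in> CL {u. 0 \<le> u}"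
      by (rule CL_div_prod[OF num a1]) auto
    moreover have "(\<lambda>t. ech (- int S) t * poly R (chi t) / (\<Prod>i<\<sigma>. (1 - \<alpha> i * ech (-1) t) ^ s i)) = h0"
    proof (rule ext)
      fix t
      have "ech (- int S) t = inverse (chi t ^ S)" by (simp add: inv_chi_pow)
      show "ech (- int S) t * poly R (chi t) / (\<Prod>i<\<sigma>. (1 - \<alpha> i * ech (-1) t) ^ s i) = h0 t"
      proof -
        have g: "(\<Prod>i<\<sigma>. (1 - \<alpha> i * ech (-1) t) ^ s i) = G2 t" unfolding G2_def ..
        show ?thesis unfolding h0_def QG2 g using chi_nz[of t] G2nz[of t] \<open>ech (- int S) t = inverse (chi t ^ S)\<close>
          by (simp add: field_simps)
      qed
    qed
    ultimately show ?thesis by simp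
  qed
  have hperp: "h \<in> CL {u. 0 \<le> u}" and psih: "(\<lambda>t. \<psi> t - h t) \<in> CL {u. u < 0}"
    using pm unfolding is_pi_minus_def \<psi>_def Hplus_CL Hperp_CL by auto
  define d where "d = (\<lambda>t. h t - h0 t)"
  have d1: "d \<in> CL {u. 0 \<le> u}" unfolding d_def by (rule CL_diff[OF hperp h0perp])
  have "(\<lambda>t. (\<psi> t - h0 t) - (\<psi> t - h t)) \<in> CL {u. u < 0}" by (rule CL_diff[OF Uplus psih])
  then have d2: "d \<in> CL {u. u < 0}" unfolding d_def by simp
  have dZ: "d \<in> CL UNIV" using d1 d2 unfolding CL_def by (auto simp: not_le[symmetric])
  have Phi_eq: "PhiTN \<sigma> \<alpha> s N t = ech (- int (N + 1)) t * G2 t / (c * G1 t)" for t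
    unfolding PhiTN_def g1_eq g2_eq inv_chi_pow by simp
  have PhidZ: "(\<lambda>t. PhiTN \<sigma> \<alpha> s N t * d t) \<in> CL UNIV"
  proof -
    have "(\<lambda>t. G2 t * d t) \<in> CL UNIV" unfolding G2_def by (rule CL_mul_prod[OF dZ]) auto
    then have "(\<lambda>t. G2 t * d t / G1 t) \<in> CL UNIV" unfolding G1_def by (rule CL_div_prod[OF _ b1]) auto
    then have "(\<lambda>t. ech (- int (N + 1)) t * ((1 / c) * (G2 t * d t / G1 t))) \<in> CL UNIV"
      by (intro CL_shift CL_cmult) auto
    moreover have "(\<lambda>t. ech (- int (N + 1)) t * ((1 / c) * (G2 t * d t / G1 t))) = (\<lambda>t. PhiTN \<sigma> \<alpha> s N t * d t)"
      by (rule ext) (simp add: Phi_eq field_simps)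
    ultimately show ?thesis by simp
  qed
  define R' where "R' = smult (1 / c) R"
  define A where "A = ([:0, 1:] :: complex poly) ^ M"
  have A0: "A \<noteq> 0" unfolding A_def by simp
  have dA: "degree A = M" unfolding A_def by (simp add: degree_power_eq)
  have Bp0: "Bp \<noteq> 0" unfolding Bp_def by (rule prod_L_nz)
  have hbAB: "hb A Bp"
  proof -
    have "hb [:0, 1:] Bp" unfolding Bp_def
      by (rule hb_prod) (auto intro: hb_power hb_x)
    then have "hb Bp [:0, 1:]" by (rule hb_sym)
    then have "hb Bp A" unfolding A_def by (rule hb_power)
    then show ?thesis by (rule hb_sym)
  qed
  have R'd: "R' = 0 \<or> degree R' < degree A + degree Bp"
    using Rd unfolding R'_def dA M_def by auto
  obtain X Y where XY: "R' = X * A + Y * Bp" and Xd: "X = 0 \<or> degree X < degree Bp"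
    and Yd: "Y = 0 \<or> degree Y < degree A"
    using bez_deg[OF hbAB A0 Bp0 R'd] by blast
  define e0 where "e0 = (\<lambda>t. poly X (chi t) / G1 t)"
  have e0plus: "e0 \<in> CL {u. u < 0}"
  proof -
    have "(\<lambda>t. ech 0 t * poly X (chi t)) \<in> CL {u. u < 0}" by (rule CL_poly) simp
    then have "(\<lambda>t. poly X (chi t)) \<in> CL {u. u < 0}" by simp
    then have "(\<lambda>t. poly X (chi t) / G1 t) \<in> CL {u. u < 0}"
      unfolding G1_def by (rule CL_div_prod[OF _ b1]) auto
    then show ?thesis unfolding e0_def .
  qed
  have Yperp: "(\<lambda>t. ech (- int M) t * poly Y (chi t)) \<in> CL {u. 0 \<le> u}"
  proof (rule CL_poly)
    fix k assume "coeff Y k \<noteq> 0"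
    then have "Y \<noteq> 0" "k \<le> degree Y" by (auto intro: le_degree)
    then have "k < M" using Yd dA by auto
    then show "int k + - int M \<notin> {u. 0 \<le> u}" by simp
  qed
  have PhiTh0: "PhiTN \<sigma> \<alpha> s N t * h0 t = e0 t + ech (- int M) t * poly Y (chi t)" for t
  proof -
    have cm: "chi t ^ M = chi t ^ (N + 1) * chi t ^ S" unfolding M_def by (simp add: power_add)
    have "PhiTN \<sigma> \<alpha> s N t * h0 t = inverse (chi t ^ (N + 1)) * G2 t / (c * G1 t) * (poly R (chi t) / (chi t ^ S * G2 t))"
      unfolding Phi_eq h0_def QG2 inv_chi_pow ..
    also have "\<dots> = poly R' (chi t) / (chi t ^ M * G1 t)"
      unfolding R'_def cm using c0 G1nz[of t] G2nz[of t] chi_nz[of t] by (simp add: field_simps)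
    also have "\<dots> = (poly X (chi t) * chi t ^ M + poly Y (chi t) * G1 t) / (chi t ^ M * G1 t)"
      unfolding XY A_def G1_eq by (simp add: poly_power)
    also have "\<dots> = e0 t + inverse (chi t ^ M) * poly Y (chi t)"
      unfolding e0_def using G1nz[of t] chi_nz[of t] by (simp add: field_simps)
    finally show ?thesis by (simp add: inv_chi_pow)
  qed
  have diffperp: "(\<lambda>t. PhiTN \<sigma> \<alpha> s N t * h t - e0 t) \<in> CL {u. 0 \<le> u}"
  proof -
    have "(\<lambda>t. ech (- int M) t * poly Y (chi t) + PhiTN \<sigma> \<alpha> s N t * d t) \<in> CL {u. 0 \<le> u}"
      by (rule CL_add[OF Yperp CL_mono[OF PhidZ]]) simp
    moreover have "(\<lambda>t. ech (- int M) t * poly Y (chi t) + PhiTN \<sigma> \<alpha> s N t * d t) = (\<lambda>t. PhiTN \<sigma> \<alpha> s N t * h t - e0 t)"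
    proof (rule ext)
      fix t
      have "PhiTN \<sigma> \<alpha> s N t * h t = PhiTN \<sigma> \<alpha> s N t * h0 t + PhiTN \<sigma> \<alpha> s N t * d t"
        unfolding d_def by (simp add: algebra_simps)
      then show "ech (- int M) t * poly Y (chi t) + PhiTN \<sigma> \<alpha> s N t * d t = PhiTN \<sigma> \<alpha> s N t * h t - e0 t"
        unfolding PhiTh0 by simp
    qed
    ultimately show ?thesis by simp
  qed
  obtain a' where a': "\<And>z. (\<forall>j<\<sigma>. 1 - \<beta> j * z \<noteq> 0) \<Longrightarrow>
      poly X z / poly Bp z = (\<Sum>j<\<sigma>. \<Sum>n\<in>{1..s j}. a' j n / (1 - \<beta> j * z) ^ n)"
    using pf[where X=X and s=s, OF binj b0] Xd unfolding Bp_def by blast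
  have e0E: "e0 \<in> Espace \<sigma> \<alpha> s"
    unfolding Espace_def
  proof (intro CollectI exI[of _ a'] ext)
    fix t
    show "e0 t = (\<Sum>j<\<sigma>. \<Sum>n\<in>{1..s j}. a' j n / (1 - cnj (\<alpha> j) * chi t) ^ n)"
      unfolding e0_def G1_eq using a'[of "chi t"] bz unfolding \<beta>_def by simp
  qed
  show "\<exists>e' \<in> Espace \<sigma> \<alpha> s. is_pi_plus (\<lambda>t. PhiTN \<sigma> \<alpha> s N t * h t) e'"
    using e0E e0plus diffperp unfolding is_pi_plus_def Hplus_CL Hperp_CL by blast
qed

end
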